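(* Let $\mathcal H$ be a Hilbert space over $\mathbb K\in\{\mathbb R,\mathbb C\}$ and let $\mathbf{x},\mathbf{y}\in\mathcal H$ be norm one vectors. Then there is a (nonzero) continuous symmetric bilinear form $T:\mathcal H\times\mathcal H\to\mathbb K$ that attains its norm at $(\mathbf{x},\mathbf{y})$.
   Context: The norm of a bilinear form is $\|T\|=\sup\{|T(\mathbf{w}_1,\mathbf{w}_2)|:\|\mathbf{w}_1\|,\|\mathbf{w}_2\|\le1\}$, and $T$ attains its norm at $(\mathbf{x},\mathbf{y})$ if $|T(\mathbf{x},\mathbf{y})|=\|T\|$. Bilinear means $\mathbb K$-bilinear. *)

theory Defs
  imports "HOL-Analysis.Analysis"
begin

definition bilin_norm :: "('a::real_normed_vector \<Rightarrow> 'a \<Rightarrow> real) \<Rightarrow> real" where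
  "bilin_norm T = Sup {\<bar>T w1 w2\<bar> | w1 w2. norm w1 \<le> 1 \<and> norm w2 \<le> 1}"

definition complex_inner_product_space ::
  "(complex \<Rightarrow> 'v::ab_group_add \<Rightarrow> 'v) \<Rightarrow> ('v \<Rightarrow> 'v \<Rightarrow> complex) \<Rightarrow> bool" where
  "complex_inner_product_space sc ip \<longleftrightarrow>
     vector_space sc \<and>
     (\<forall>x y z. ip (x + y) z = ip x z + ip y z) \<and>
     (\<forall>a x y. ip (sc a x) y = a * ip x y) \<and>
     (\<forall>x y. ip y x = cnj (ip x y)) \<and>
     (\<forall>x. Im (ip x x) = 0 \<and> Re (ip x x) \<ge> 0) \<and>
     (\<forall>x. ip x x = 0 \<longrightarrow> x = 0)"

definition ip_norm :: "('v \<Rightarrow> 'v \<Rightarrow> complex) \<Rightarrow> 'v \<Rightarrow> real" where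
  "ip_norm ip x = sqrt (Re (ip x x))"

definition complex_hilbert_space ::
  "(complex \<Rightarrow> 'v::ab_group_add \<Rightarrow> 'v) \<Rightarrow> ('v \<Rightarrow> 'v \<Rightarrow> complex) \<Rightarrow> bool" where
  "complex_hilbert_space sc ip \<longleftrightarrow>
     complex_inner_product_space sc ip \<and>
     (\<forall>X :: nat \<Rightarrow> 'v.
        (\<forall>e>0. \<exists>N. \<forall>m\<ge>N. \<forall>n\<ge>N. ip_norm ip (X m - X n) < e) \<longrightarrow>
        (\<exists>L. (\<lambda>n. ip_norm ip (X n - L)) \<longlonglongrightarrow> 0))"

definition complex_bilinear ::
  "(complex \<Rightarrow> 'v::ab_group_add \<Rightarrow> 'v) \<Rightarrow> ('v \<Rightarrow> 'v \<Rightarrow> complex) \<Rightarrow> bool" where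
  "complex_bilinear sc T \<longleftrightarrow>
     (\<forall>y. Vector_Spaces.linear sc ((*) :: complex \<Rightarrow> complex \<Rightarrow> complex) (\<lambda>x. T x y)) \<and>
     (\<forall>x. Vector_Spaces.linear sc ((*) :: complex \<Rightarrow> complex \<Rightarrow> complex) (\<lambda>y. T x y))"

definition ip_continuous2 ::
  "('v::ab_group_add \<Rightarrow> 'v \<Rightarrow> complex) \<Rightarrow> ('v \<Rightarrow> 'v \<Rightarrow> complex) \<Rightarrow> bool" where
  "ip_continuous2 ip T \<longleftrightarrow>
     (\<forall>a b. \<forall>e>0. \<exists>d>0. \<forall>x y. ip_norm ip (x - a) < d \<and> ip_norm ip (y - b) < d \<longrightarrow>
        cmod (T x y - T a b) < e)"

definition ip_bilin_norm ::
  "('v \<Rightarrow> 'v \<Rightarrow> complex) \<Rightarrow> ('v \<Rightarrow> 'v \<Rightarrow> complex) \<Rightarrow> real" where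
  "ip_bilin_norm ip T =
     Sup {cmod (T w1 w2) | w1 w2. ip_norm ip w1 \<le> 1 \<and> ip_norm ip w2 \<le> 1}"

end

theory Submission
  imports Defs
begin

lemma norm_mult_self_eq: "norm x * norm x = inner x x" by (simp add: dot_square_norm power2_eq_square)

lemma cs2:
  fixes a b c d m n :: real
  assumes "a\<^sup>2 + b\<^sup>2 \<le> m\<^sup>2" "c\<^sup>2 + d\<^sup>2 \<le> n\<^sup>2" "m \<ge> 0" "n \<ge> 0"
  shows "\<bar>a*c\<bar> + \<bar>b*d\<bar> \<le> m*n"
proof -
  have "(\<bar>a*c\<bar> + \<bar>b*d\<bar>)\<^sup>2 \<le> (a\<^sup>2 + b\<^sup>2) * (c\<^sup>2 + d\<^sup>2)"
  proof -
    have "0 \<le> (\<bar>a\<bar>*\<bar>d\<bar> - \<bar>b\<bar>*\<bar>c\<bar>)\<^sup>2" by simp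
    moreover have "(\<bar>a*c\<bar> + \<bar>b*d\<bar>)\<^sup>2 = (\<bar>a\<bar>\<^sup>2 + \<bar>b\<bar>\<^sup>2) * (\<bar>c\<bar>\<^sup>2 + \<bar>d\<bar>\<^sup>2) - (\<bar>a\<bar>*\<bar>d\<bar> - \<bar>b\<bar>*\<bar>c\<bar>)\<^sup>2"
      unfolding abs_mult by (simp only: power2_eq_square algebra_simps)
    ultimately show ?thesis by simp
  qed
  also have "\<dots> \<le> m\<^sup>2 * n\<^sup>2" using assms by (intro mult_mono) auto
  also have "\<dots> = (m*n)\<^sup>2" by (simp add: power_mult_distrib)
  finally show ?thesis using assms by (meson abs_ge_zero add_nonneg_nonneg mult_nonneg_nonneg power2_le_imp_le)
qed

lemma bessel_real:
  fixes u p q :: "'a::real_inner"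
  assumes "inner p q = 0"
  shows "(inner u p)\<^sup>2 / (norm p)\<^sup>2 + (inner u q)\<^sup>2 / (norm q)\<^sup>2 \<le> (norm u)\<^sup>2"
proof -
  define a where "a = inner u p / (norm p)\<^sup>2"
  define b where "b = inner u q / (norm q)\<^sup>2"
  have "0 \<le> inner (u - a *\<^sub>R p - b *\<^sub>R q) (u - a *\<^sub>R p - b *\<^sub>R q)" by simp
  also have "\<dots> = (norm u)\<^sup>2 - 2*a*inner u p - 2*b*inner u q + a\<^sup>2 * (norm p)\<^sup>2 + b\<^sup>2*(norm q)\<^sup>2"
    using assms by (simp add: inner_diff_left inner_diff_right inner_commute power2_norm_eq_inner
       power2_eq_square algebra_simps norm_mult_self_eq del: dot_square_norm)
  finally have 0: "0 \<le> (norm u)\<^sup>2 - 2*a*inner u p - 2*b*inner u q + a\<^sup>2 * (norm p)\<^sup>2 + b\<^sup>2*(norm q)\<^sup>2" .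
  have 1: "a\<^sup>2 * (norm p)\<^sup>2 - 2*a*inner u p = - (inner u p)\<^sup>2 / (norm p)\<^sup>2"
    by (cases "p = 0") (auto simp: a_def field_simps power2_eq_square)
  have 2: "b\<^sup>2 * (norm q)\<^sup>2 - 2*b*inner u q = - (inner u q)\<^sup>2 / (norm q)\<^sup>2"
    by (cases "q = 0") (auto simp: b_def field_simps power2_eq_square)
  show ?thesis using 0 1 2 by linarith
qed

lemma real_part:
  fixes x y :: "'a::{real_inner, complete_space}"
  assumes "norm x = 1" "norm y = 1"
  shows "\<exists>T :: 'a \<Rightarrow> 'a \<Rightarrow> real.
          bilinear T \<and> (\<forall>u v. T u v = T v u) \<and> continuous_on UNIV (\<lambda>(u, v). T u v) \<and>
          T \<noteq> (\<lambda>_ _. 0) \<and> \<bar>T x y\<bar> = bilin_norm T"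
proof -
  define p where "p = x + y"
  define q where "q = x - y"
  define T where "T = (\<lambda>u v. inner u p * inner v p / (norm p)\<^sup>2 - inner u q * inner v q / (norm q)\<^sup>2)"
  have xx: "inner x x = 1" "inner y y = 1" using assms by (simp_all add: dot_square_norm)
  have pq: "inner p q = 0" using xx by (simp add: p_def q_def inner_add_left inner_add_right inner_diff_left inner_diff_right inner_commute)
  have bound: "\<bar>T u v\<bar> \<le> norm u * norm v" for u v
  proof -
    define Au where "Au = inner u p / norm p"
    define Av where "Av = inner v p / norm p"
    define Bu where "Bu = inner u q / norm q"
    define Bv where "Bv = inner v q / norm q"
    have "T u v = Au * Av - Bu * Bv"
      by (simp add: T_def Au_def Av_def Bu_def Bv_def power2_eq_square)
    moreover have "\<bar>Au*Av\<bar> + \<bar>Bu*Bv\<bar> \<le> norm u * norm v"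
      apply (rule cs2)
      using bessel_real[OF pq, of u] bessel_real[OF pq, of v]
      by (simp_all add: Au_def Av_def Bu_def Bv_def power_divide)
    ultimately show ?thesis by linarith
  qed
  define c where "c = inner x y"
  have c1: "\<bar>c\<bar> \<le> 1" using Cauchy_Schwarz_ineq2[of x y] assms by (simp add: c_def)
  have "inner x p = 1 + c" "inner y p = 1 + c" "inner p p = 2 + 2*c"
       "inner x q = 1 - c" "inner y q = c - 1" "inner q q = 2 - 2*c"
    using xx by (simp_all add: p_def q_def c_def inner_add_left inner_add_right inner_diff_left inner_diff_right inner_commute)
  then have "T x y = (1+c)*(1+c)/(2+2*c) - (1-c)*(c-1)/(2-2*c)"
    by (simp add: T_def dot_square_norm[symmetric])
  also have "\<dots> = 1" using c1
    by (cases "c = 1"; cases "c = -1") (auto simp: field_simps)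
  finally have Txy: "T x y = 1" .
  have nrm: "bilin_norm T = 1"
    unfolding bilin_norm_def
  proof (rule cSup_eq_maximum)
    show "1 \<in> {\<bar>T w1 w2\<bar> |w1 w2. norm w1 \<le> 1 \<and> norm w2 \<le> 1}"
      using Txy assms by (intro CollectI exI[of _ x] exI[of _ y]) simp
    fix z assume "z \<in> {\<bar>T w1 w2\<bar> |w1 w2. norm w1 \<le> 1 \<and> norm w2 \<le> 1}"
    then obtain w1 w2 where z: "z = \<bar>T w1 w2\<bar>" "norm w1 \<le> 1" "norm w2 \<le> 1" by blast
    then have "norm w1 * norm w2 \<le> 1" by (simp add: mult_le_one)
    then show "z \<le> 1" using bound[of w1 w2] z by linarith
  qed
  then have "\<bar>T x y\<bar> = bilin_norm T" using Txy by simp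
  moreover have "bilinear T"
    unfolding bilinear_def T_def
    by (intro allI conjI linearI) (simp_all add: inner_add_left inner_add_right  diff_divide_distrib add_divide_distrib algebra_simps)
  moreover have "\<forall>u v. T u v = T v u" by (simp add: T_def mult.commute)
  moreover have "continuous_on UNIV (\<lambda>(u, v). T u v)"
    unfolding T_def case_prod_unfold divide_inverse by (intro continuous_intros)
  moreover have "T \<noteq> (\<lambda>_ _. 0)"
  proof
    assume "T = (\<lambda>_ _. 0)"
    then have "T x y = 0" by simp
    with Txy show False by simp
  qed
  ultimately have "bilinear T \<and> (\<forall>u v. T u v = T v u) \<and> continuous_on UNIV (\<lambda>(u, v). T u v) \<and>
          T \<noteq> (\<lambda>_ _. 0) \<and> \<bar>T x y\<bar> = bilin_norm T" by (intro conjI)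
  then show ?thesis apply - apply (rule exI[of _ T]) by assumption
qed


locale cips =
  fixes sc :: "complex \<Rightarrow> 'v::ab_group_add \<Rightarrow> 'v" and ip :: "'v \<Rightarrow> 'v \<Rightarrow> complex"
  assumes cips: "complex_inner_product_space sc ip"
begin

lemma vs: "vector_space sc" using cips by (simp add: complex_inner_product_space_def)

sublocale vector_space sc by (rule vs)

lemmas cf = cips[unfolded complex_inner_product_space_def]

lemma ip_add_left: "ip (x+y) z = ip x z + ip y z"
  by (rule cf[THEN conjunct2, THEN conjunct1, rule_format])
lemma ip_scale_left: "ip (sc a x) y = a * ip x y"
  by (rule cf[THEN conjunct2, THEN conjunct2, THEN conjunct1, rule_format])
lemma ip_sym: "ip y x = cnj (ip x y)"
  by (rule cf[THEN conjunct2, THEN conjunct2, THEN conjunct2, THEN conjunct1, rule_format])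
lemma ip_self_Im: "Im (ip x x) = 0"
  using cf[THEN conjunct2, THEN conjunct2, THEN conjunct2, THEN conjunct2, THEN conjunct1, rule_format, of x] by (rule conjunct1)
lemma ip_self_nonneg: "Re (ip x x) \<ge> 0"
  using cf[THEN conjunct2, THEN conjunct2, THEN conjunct2, THEN conjunct2, THEN conjunct1, rule_format, of x] by (rule conjunct2)
lemma ip_self_zero: "ip x x = 0 \<Longrightarrow> x = 0"
  by (rule cf[THEN conjunct2, THEN conjunct2, THEN conjunct2, THEN conjunct2, THEN conjunct2, rule_format])
lemma ip_self: "ip x x = complex_of_real (Re (ip x x))"
  using ip_self_Im[of x] by (simp add: complex_eq_iff)
lemma ip_add_right: "ip x (y+z) = ip x y + ip x z"
proof -
  have "ip x (y+z) = cnj (ip (y+z) x)" by (rule ip_sym)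
  also have "\<dots> = cnj (ip y x) + cnj (ip z x)" by (simp add: ip_add_left)
  finally show ?thesis by (simp add: ip_sym[of y x] ip_sym[of z x])
qed
lemma ip_scale_right: "ip x (sc a y) = cnj a * ip x y"
proof -
  have "ip x (sc a y) = cnj (ip (sc a y) x)" by (rule ip_sym)
  also have "\<dots> = cnj a * cnj (ip y x)" by (simp add: ip_scale_left)
  finally show ?thesis by (simp add: ip_sym[of y x])
qed
lemma ip_zero_left: "ip 0 y = 0" using ip_add_left[of 0 0 y] by simp
lemma ip_zero_right: "ip y 0 = 0" using ip_add_right[of y 0 0] by simp
lemma ip_minus_left: "ip (-x) y = - ip x y"
proof -
  have h: "0 = ip x y + ip (-x) y" using ip_add_left[of x "-x" y] by (simp only: right_minus ip_zero_left)
  show ?thesis using minus_unique[OF h[symmetric]] by (rule sym)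
qed
lemma ip_minus_right: "ip y (-x) = - ip y x"
proof -
  have h: "0 = ip y x + ip y (-x)" using ip_add_right[of y x "-x"] by (simp only: right_minus ip_zero_right)
  show ?thesis using minus_unique[OF h[symmetric]] by (rule sym)
qed
lemma ip_diff_left: "ip (x - y) z = ip x z - ip y z"
  by (simp only: diff_conv_add_uminus ip_add_left ip_minus_left)
lemma ip_diff_right: "ip z (x - y) = ip z x - ip z y"
  by (simp only: diff_conv_add_uminus ip_add_right ip_minus_right)

lemma proj:
  "Re (ip (u - sc (ip u w / ip w w) w) (u - sc (ip u w / ip w w) w)) = Re (ip u u) - (cmod (ip u w))\<^sup>2 / Re (ip w w)"
proof (cases "w = 0")
  case True
  then show ?thesis by (simp add: ip_zero_right)
next
  case False
  define n where "n = Re (ip w w)"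
  have k: "ip w w = complex_of_real n" using ip_self n_def by simp
  have n0: "n \<noteq> 0"
  proof
    assume "n = 0"
    then have "ip w w = 0" by (simp add: k)
    then have "w = 0" by (rule ip_self_zero)
    with False show False by simp
  qed
  define g where "g = ip u w"
  have gw: "ip w u = cnj g" by (simp add: g_def ip_sym[of u w])
  define a where "a = g / complex_of_real n"
  have "ip (u - sc a w) (u - sc a w) = ip u u - cnj a * g - a * cnj g + a * cnj a * ip w w"
    by (simp add: ip_diff_left ip_diff_right ip_scale_left ip_scale_right gw g_def algebra_simps)
  also have "\<dots> = ip u u - g * cnj g / complex_of_real n"
    using n0 by (simp add: a_def k field_simps)
  also have "\<dots> = ip u u - complex_of_real ((cmod g)\<^sup>2 / n)"
    by (simp only: complex_norm_square of_real_divide)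
  finally have "Re (ip (u - sc a w) (u - sc a w)) = Re (ip u u) - (cmod g)\<^sup>2 / n"
    by (simp only: minus_complex.sel Re_complex_of_real)
  then show ?thesis by (simp add: a_def g_def k n_def[symmetric])
qed


lemma lin_intro:
  assumes "\<And>x y. f (x+y) = f x + f y" "\<And>c x. f (sc c x) = c * f x"
  shows "Vector_Spaces.linear sc ((*)::complex\<Rightarrow>complex\<Rightarrow>complex) f"
  unfolding Vector_Spaces.linear_def module_hom_def module_hom_axioms_def
  using vs vector_space_over_itself.vector_space_axioms assms
  by (simp add: vector_space_def module_def algebra_simps)

lemma bessel:
  assumes pq: "ip p q = 0"
  shows "(cmod (ip u p))\<^sup>2 / Re (ip p p) + (cmod (ip u q))\<^sup>2 / Re (ip q q) \<le> Re (ip u u)"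
proof -
  define u1 where "u1 = u - sc (ip u p / ip p p) p"
  have 1: "Re (ip u1 u1) = Re (ip u u) - (cmod (ip u p))\<^sup>2 / Re (ip p p)"
    unfolding u1_def by (rule proj)
  have "ip u1 q = ip u q" unfolding u1_def by (simp add: ip_diff_left ip_scale_left pq)
  moreover have "Re (ip (u1 - sc (ip u1 q / ip q q) q) (u1 - sc (ip u1 q / ip q q) q)) = Re (ip u1 u1) - (cmod (ip u1 q))\<^sup>2 / Re (ip q q)"
    by (rule proj)
  moreover have "Re (ip (u1 - sc (ip u1 q / ip q q) q) (u1 - sc (ip u1 q / ip q q) q)) \<ge> 0"
    by (rule ip_self_nonneg)
  ultimately show ?thesis using 1 by simp
qed


lemma ip_norm_sq: "(ip_norm ip u)\<^sup>2 = Re (ip u u)"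
  unfolding ip_norm_def using ip_self_nonneg[of u] by simp

lemma ip_norm_nonneg: "ip_norm ip u \<ge> 0"
  unfolding ip_norm_def using ip_self_nonneg[of u] by simp

lemma complex_part:
  assumes nx: "ip_norm ip x' = 1" and ny: "ip_norm ip y' = 1"
  shows "\<exists>T :: 'v \<Rightarrow> 'v \<Rightarrow> complex.
          complex_bilinear sc T \<and> (\<forall>u v. T u v = T v u) \<and> ip_continuous2 ip T \<and>
          T \<noteq> (\<lambda>_ _. 0) \<and> cmod (T x' y') = ip_bilin_norm ip T"
proof -
  have xx: "ip x' x' = 1"
  proof -
    have "Re (ip x' x') = 1" using ip_norm_sq[of x'] nx by simp
    then show ?thesis using ip_self[of x'] by simp
  qed
  have yy: "ip y' y' = 1"
  proof -
    have "Re (ip y' y') = 1" using ip_norm_sq[of y'] ny by simp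
    then show ?thesis using ip_self[of y'] by simp
  qed
  define g where "g = ip x' y'"
  define c where "c = cmod g"
  have c0: "c \<ge> 0" by (simp add: c_def)
  define \<omega> where "\<omega> = (if g = 0 then 1 else cnj g / complex_of_real c)"
  have om1: "cmod \<omega> = 1" by (simp add: \<omega>_def c_def norm_divide)
  have omg: "\<omega> * g = complex_of_real c"
  proof (cases "g = 0")
    case True then show ?thesis by (simp add: \<omega>_def c_def)
  next
    case False
    then have "c \<noteq> 0" by (simp add: c_def)
    moreover have "cnj g * g = complex_of_real (c\<^sup>2)"
      by (simp only: c_def complex_norm_square mult.commute)
    ultimately show ?thesis using False by (simp add: \<omega>_def power2_eq_square field_simps)
  qed
  have omc: "\<omega> * cnj \<omega> = 1"
    by (simp only: complex_norm_square[symmetric] om1) simp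
  define z where "z = sc \<omega> x'"
  have zy: "ip z y' = complex_of_real c" by (simp add: z_def ip_scale_left omg g_def[symmetric])
  have yz: "ip y' z = complex_of_real c" by (simp add: ip_sym[of y' z] zy)
  have zz: "ip z z = 1" using omc by (simp add: z_def ip_scale_left ip_scale_right xx mult.commute)
  define p where "p = z + y'"
  define q where "q = z - y'"
  have pq: "ip p q = 0"
    by (simp add: p_def q_def ip_add_left ip_diff_right zz zy yz yy)
  have zp: "ip z p = 1 + complex_of_real c" and yp: "ip y' p = 1 + complex_of_real c"
    and pp: "ip p p = 2 + 2 * complex_of_real c"
    and zq: "ip z q = 1 - complex_of_real c" and yq: "ip y' q = complex_of_real c - 1"
    and qq: "ip q q = 2 - 2 * complex_of_real c"
    by (simp_all add: p_def q_def ip_add_left ip_add_right ip_diff_left ip_diff_right zz zy yz yy)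
  define cp where "cp = inverse (ip p p)"
  define cq where "cq = inverse (ip q q)"
  define T where "T = (\<lambda>u v. ip u p * ip v p * cp - ip u q * ip v q * cq)"
  have Tsym: "\<forall>u v. T u v = T v u" by (simp add: T_def mult.commute)
  have Tadd: "T (u1 + u2) v = T u1 v + T u2 v" for u1 u2 v
    by (simp add: T_def ip_add_left algebra_simps)
  have Tscale: "T (sc a u) v = a * T u v" for a u v
    by (simp add: T_def ip_scale_left algebra_simps)
  have Tdiff: "T x y - T a b = T (x - a) (y - b) + T (x - a) b + T a (y - b)" for x y a b
    by (simp add: T_def ip_diff_left ip_diff_right algebra_simps)
  have Tzy: "T z y' = 1"
  proof (cases "c = 1")
    case True
    then show ?thesis by (simp add: T_def zp yp zq yq cp_def cq_def pp qq)
  next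
    case False
    have "(2::complex) + 2 * complex_of_real c \<noteq> 0"
    proof
      assume "(2::complex) + 2 * complex_of_real c = 0"
      then have "Re ((2::complex) + 2 * complex_of_real c) = 0" by simp
      with c0 show False by simp
    qed
    moreover have "(2::complex) - 2 * complex_of_real c \<noteq> 0"
    proof
      assume "(2::complex) - 2 * complex_of_real c = 0"
      then have "Re ((2::complex) - 2 * complex_of_real c) = 0" by simp
      with False show False by simp
    qed
    moreover have "complex_of_real c * complex_of_real c \<noteq> 1"
    proof
      assume "complex_of_real c * complex_of_real c = 1"
      then have "complex_of_real (c * c) = 1" by simp
      then have "c * c = 1" by (simp only: of_real_eq_1_iff)
      then have "(c - 1) * (c + 1) = 0" by (simp add: algebra_simps)
      then have "c - 1 = 0" using c0 by simp
      with False show False by simp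
    qed
    ultimately show ?thesis
      by (simp add: T_def zp yp zq yq cp_def cq_def pp qq field_simps)
  qed
  have "T z y' = \<omega> * T x' y'" by (simp add: z_def Tscale)
  then have Txy: "cmod (T x' y') = 1" using Tzy om1 by (metis norm_mult mult_1 norm_one)
  define kp where "kp = Re (ip p p)"
  define kq where "kq = Re (ip q q)"
  have kp: "ip p p = complex_of_real kp" using ip_self[of p] by (simp add: kp_def)
  have kq: "ip q q = complex_of_real kq" using ip_self[of q] by (simp add: kq_def)
  have kp0: "kp \<ge> 0" by (simp add: kp_def ip_self_nonneg)
  have kq0: "kq \<ge> 0" by (simp add: kq_def ip_self_nonneg)
  have skp: "inverse (sqrt kp) * inverse (sqrt kp) = inverse kp"
  proof -
    have "sqrt kp * sqrt kp = kp" using kp0 by simp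
    then show ?thesis by (metis inverse_mult_distrib)
  qed
  have skq: "inverse (sqrt kq) * inverse (sqrt kq) = inverse kq"
  proof -
    have "sqrt kq * sqrt kq = kq" using kq0 by simp
    then show ?thesis by (metis inverse_mult_distrib)
  qed
  have bound: "cmod (T u v) \<le> ip_norm ip u * ip_norm ip v" for u v
  proof -
    define Au where "Au = cmod (ip u p) / sqrt kp"
    define Av where "Av = cmod (ip v p) / sqrt kp"
    define Bu where "Bu = cmod (ip u q) / sqrt kq"
    define Bv where "Bv = cmod (ip v q) / sqrt kq"
    have "cmod (T u v) \<le> cmod (ip u p * ip v p * cp) + cmod (ip u q * ip v q * cq)"
      unfolding T_def by (rule norm_triangle_ineq4)
    also have "cmod (ip u p * ip v p * cp) = \<bar>Au * Av\<bar>"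
      using kp0 skp by (simp add: Au_def Av_def cp_def kp norm_mult norm_inverse divide_inverse)
    also have "cmod (ip u q * ip v q * cq) = \<bar>Bu * Bv\<bar>"
      using kq0 skq by (simp add: Bu_def Bv_def cq_def kq norm_mult norm_inverse divide_inverse)
    also have "\<bar>Au * Av\<bar> + \<bar>Bu * Bv\<bar> \<le> ip_norm ip u * ip_norm ip v"
    proof (rule cs2)
      show "Au\<^sup>2 + Bu\<^sup>2 \<le> (ip_norm ip u)\<^sup>2"
        using bessel[OF pq, of u] kp0 kq0
        by (simp add: Au_def Bu_def power_divide ip_norm_sq kp_def[symmetric] kq_def[symmetric])
      show "Av\<^sup>2 + Bv\<^sup>2 \<le> (ip_norm ip v)\<^sup>2"
        using bessel[OF pq, of v] kp0 kq0
        by (simp add: Av_def Bv_def power_divide ip_norm_sq kp_def[symmetric] kq_def[symmetric])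
    qed (simp_all add: ip_norm_nonneg)
    finally show ?thesis by simp
  qed
  have nrm: "ip_bilin_norm ip T = 1"
    unfolding ip_bilin_norm_def
  proof (rule cSup_eq_maximum)
    show "1 \<in> {cmod (T w1 w2) |w1 w2. ip_norm ip w1 \<le> 1 \<and> ip_norm ip w2 \<le> 1}"
      using Txy nx ny by (intro CollectI exI[of _ x'] exI[of _ y']) simp
    fix r assume "r \<in> {cmod (T w1 w2) |w1 w2. ip_norm ip w1 \<le> 1 \<and> ip_norm ip w2 \<le> 1}"
    then obtain w1 w2 where r: "r = cmod (T w1 w2)" "ip_norm ip w1 \<le> 1" "ip_norm ip w2 \<le> 1" by blast
    then have "ip_norm ip w1 * ip_norm ip w2 \<le> 1" using ip_norm_nonneg by (simp add: mult_le_one)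
    then show "r \<le> 1" using bound[of w1 w2] r by linarith
  qed
  have bil: "complex_bilinear sc T"
    unfolding complex_bilinear_def
  proof (intro allI conjI)
    fix y show "Vector_Spaces.linear sc (*) (\<lambda>x. T x y)"
      by (rule lin_intro) (simp_all add: Tadd Tscale)
  next
    fix x show "Vector_Spaces.linear sc (*) (\<lambda>y. T x y)"
      by (rule lin_intro) (simp_all add: Tsym[rule_format, of x] Tadd Tscale)
  qed
  have cont: "ip_continuous2 ip T"
    unfolding ip_continuous2_def
  proof (intro allI impI)
    fix a b and e :: real assume e: "e > 0"
    define na where "na = ip_norm ip a"
    define nb where "nb = ip_norm ip b"
    have na0: "na \<ge> 0" and nb0: "nb \<ge> 0" by (simp_all add: na_def nb_def ip_norm_nonneg)
    define d where "d = min 1 (e / (2 * (1 + na + nb)))"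
    have d0: "d > 0" using e na0 nb0 by (simp add: d_def)
    have d1: "d \<le> 1" by (simp add: d_def)
    have de: "d * (1 + na + nb) \<le> e / 2"
    proof -
      have "d \<le> e / (2 * (1 + na + nb))" by (simp add: d_def)
      then have "d * (1 + na + nb) \<le> e / (2 * (1 + na + nb)) * (1 + na + nb)"
        using na0 nb0 by (intro mult_right_mono) auto
      also have "\<dots> = e / 2" using na0 nb0 by (simp add: field_simps)
      finally show ?thesis .
    qed
    show "\<exists>d>0. \<forall>x y. ip_norm ip (x - a) < d \<and> ip_norm ip (y - b) < d \<longrightarrow> cmod (T x y - T a b) < e"
    proof (intro exI[of _ d] conjI allI impI)
      show "d > 0" by (rule d0)
      fix x y assume xy: "ip_norm ip (x - a) < d \<and> ip_norm ip (y - b) < d"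
      define dx where "dx = ip_norm ip (x - a)"
      define dy where "dy = ip_norm ip (y - b)"
      have dx: "0 \<le> dx" "dx \<le> d" and dy: "0 \<le> dy" "dy \<le> d"
        using xy by (simp_all add: dx_def dy_def ip_norm_nonneg less_imp_le)
      have "cmod (T x y - T a b) \<le> cmod (T (x - a) (y - b)) + cmod (T (x - a) b) + cmod (T a (y - b))"
        unfolding Tdiff by (meson norm_triangle_ineq add_mono order_trans order_refl)
      also have "\<dots> \<le> dx * dy + dx * nb + na * dy"
        using bound[of "x - a" "y - b"] bound[of "x - a" b] bound[of a "y - b"]
        by (simp add: dx_def dy_def na_def nb_def)
      also have "\<dots> \<le> d * 1 + d * nb + na * d"
        using dx dy d1 na0 nb0
        by (intro add_mono mult_mono) auto
      also have "\<dots> = d * (1 + na + nb)" by (simp add: algebra_simps)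
      also have "\<dots> < e" using de e by linarith
      finally show "cmod (T x y - T a b) < e" .
    qed
  qed
  have nz: "T \<noteq> (\<lambda>_ _. 0)"
  proof
    assume "T = (\<lambda>_ _. 0)"
    then have "T x' y' = 0" by simp
    with Txy show False by simp
  qed
  have "complex_bilinear sc T \<and> (\<forall>u v. T u v = T v u) \<and> ip_continuous2 ip T \<and>
          T \<noteq> (\<lambda>_ _. 0) \<and> cmod (T x' y') = ip_bilin_norm ip T"
    using bil Tsym cont nz Txy nrm by simp
  then show ?thesis apply - apply (rule exI[of _ T]) by assumption
qed

end

theorem proposition2p3:
  fixes x y :: "'a::{real_inner, complete_space}"
    and sc :: "complex \<Rightarrow> 'v::ab_group_add \<Rightarrow> 'v"
    and ip :: "'v \<Rightarrow> 'v \<Rightarrow> complex"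
  shows
    "(norm x = 1 \<and> norm y = 1 \<longrightarrow>
       (\<exists>T :: 'a \<Rightarrow> 'a \<Rightarrow> real.
          bilinear T \<and> (\<forall>u v. T u v = T v u) \<and> continuous_on UNIV (\<lambda>(u, v). T u v) \<and>
          T \<noteq> (\<lambda>_ _. 0) \<and> \<bar>T x y\<bar> = bilin_norm T))
     \<and>
     (\<forall>x' y'. complex_hilbert_space sc ip \<and> ip_norm ip x' = 1 \<and> ip_norm ip y' = 1 \<longrightarrow>
       (\<exists>T :: 'v \<Rightarrow> 'v \<Rightarrow> complex.
          complex_bilinear sc T \<and> (\<forall>u v. T u v = T v u) \<and> ip_continuous2 ip T \<and>
          T \<noteq> (\<lambda>_ _. 0) \<and> cmod (T x' y') = ip_bilin_norm ip T))"
proof (intro conjI impI allI)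
  assume "norm x = 1 \<and> norm y = 1"
  then show "\<exists>T :: 'a \<Rightarrow> 'a \<Rightarrow> real.
          bilinear T \<and> (\<forall>u v. T u v = T v u) \<and> continuous_on UNIV (\<lambda>(u, v). T u v) \<and>
          T \<noteq> (\<lambda>_ _. 0) \<and> \<bar>T x y\<bar> = bilin_norm T"
    using real_part by blast
next
  fix x' y' assume h: "complex_hilbert_space sc ip \<and> ip_norm ip x' = 1 \<and> ip_norm ip y' = 1"
  then have "complex_inner_product_space sc ip" by (simp add: complex_hilbert_space_def)
  then interpret cips sc ip by unfold_locales
  show "\<exists>T :: 'v \<Rightarrow> 'v \<Rightarrow> complex.
          complex_bilinear sc T \<and> (\<forall>u v. T u v = T v u) \<and> ip_continuous2 ip T \<and>
          T \<noteq> (\<lambda>_ _. 0) \<and> cmod (T x' y') = ip_bilin_norm ip T"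
    using h by (intro complex_part) simp_all
qed

end
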